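(* Let $n\ge 2$ and let $G$ be a tree on $n$ vertices. Then $\mathrm{irr}_t(G)\ge 2n-4$, with equality if and only if $G\cong P_n$.
   Context: For a graph $G=(V,E)$ and $w\in V$, $d_G(w)$ is the degree of $w$. The total irregularity is $\mathrm{irr}_t(G)=\frac12\sum_{x,y\in V}|d_G(x)-d_G(y)|$, where the sum runs over all ordered pairs of vertices. $P_n$ denotes the path on $n$ vertices. *)

theory Defs
  imports Complex_Main
begin

definition simple_graph :: "'a set \<Rightarrow> 'a set set \<Rightarrow> bool" where
  "simple_graph V E \<longleftrightarrow> finite V \<and> (\<forall>e\<in>E. e \<subseteq> V \<and> card e = 2)"

definition degree :: "'a set set \<Rightarrow> 'a \<Rightarrow> nat" where
  "degree E w = card {e\<in>E. w \<in> e}"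

definition is_walk :: "'a set \<Rightarrow> 'a set set \<Rightarrow> 'a list \<Rightarrow> bool" where
  "is_walk V E xs \<longleftrightarrow> xs \<noteq> [] \<and> set xs \<subseteq> V \<and>
     (\<forall>i. Suc i < length xs \<longrightarrow> {xs ! i, xs ! Suc i} \<in> E)"

definition connected_graph :: "'a set \<Rightarrow> 'a set set \<Rightarrow> bool" where
  "connected_graph V E \<longleftrightarrow>
     (\<forall>x\<in>V. \<forall>y\<in>V. \<exists>xs. is_walk V E xs \<and> hd xs = x \<and> last xs = y)"

definition has_cycle :: "'a set \<Rightarrow> 'a set set \<Rightarrow> bool" where
  "has_cycle V E \<longleftrightarrow>
     (\<exists>xs. length xs \<ge> 3 \<and> distinct xs \<and> is_walk V E xs \<and> {last xs, hd xs} \<in> E)"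

definition is_tree :: "'a set \<Rightarrow> 'a set set \<Rightarrow> bool" where
  "is_tree V E \<longleftrightarrow> simple_graph V E \<and> V \<noteq> {} \<and> connected_graph V E \<and> \<not> has_cycle V E"

definition irr_t :: "'a set \<Rightarrow> 'a set set \<Rightarrow> real" where
  "irr_t V E = (1/2) * (\<Sum>x\<in>V. \<Sum>y\<in>V. \<bar>real (degree E x) - real (degree E y)\<bar>)"

definition path_V :: "nat \<Rightarrow> nat set" where
  "path_V n = {0..<n}"

definition path_E :: "nat \<Rightarrow> nat set set" where
  "path_E n = {{i, Suc i} | i. Suc i < n}"

definition graph_iso :: "'a set \<Rightarrow> 'a set set \<Rightarrow> 'b set \<Rightarrow> 'b set set \<Rightarrow> bool" where
  "graph_iso V E V' E' \<longleftrightarrow>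
     (\<exists>f. bij_betw f V V' \<and> (\<forall>x\<in>V. \<forall>y\<in>V. {x, y} \<in> E \<longleftrightarrow> {f x, f y} \<in> E'))"

end

theory Submission
  imports Defs
begin

lemma walk_single[simp]: "is_walk V E [a] \<longleftrightarrow> a \<in> V" by (auto simp: is_walk_def)
lemma walk_Cons2[simp]: "is_walk V E (a#b#xs) \<longleftrightarrow> a\<in>V \<and> {a,b}\<in>E \<and> is_walk V E (b#xs)"
  apply (auto simp: is_walk_def nth_Cons split: nat.splits)
  done
lemma walk_append: "xs \<noteq> [] \<Longrightarrow> ys \<noteq> [] \<Longrightarrow> is_walk V E (xs @ ys) \<longleftrightarrow> is_walk V E xs \<and> is_walk V E ys \<and> {last xs, hd ys} \<in> E"
proof (induction xs)
  case Nil then show ?case by simp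
next
  case (Cons a xs)
  show ?case
  proof (cases "xs = []")
    case True
    then show ?thesis using Cons.prems by (cases ys) auto
  next
    case False
    then obtain c zs where xs: "xs = c # zs" by (cases xs) auto
    have "is_walk V E ((a#xs) @ ys) \<longleftrightarrow> a \<in> V \<and> {a,c} \<in> E \<and> is_walk V E (xs @ ys)"
      using xs by simp
    also have "\<dots> \<longleftrightarrow> a \<in> V \<and> {a,c} \<in> E \<and> is_walk V E xs \<and> is_walk V E ys \<and> {last xs, hd ys} \<in> E"
      using Cons False by simp
    finally show ?thesis using xs False by auto
  qed
qed
lemma walk_rev[simp]: "is_walk V E (rev xs) \<longleftrightarrow> is_walk V E xs"
proof (induction xs)
  case Nil then show ?case by (simp add: is_walk_def)
next
  case (Cons a xs)
  show ?case
  proof (cases "xs = []")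
    case True then show ?thesis by simp
  next
    case False
    then obtain c zs where xs: "xs = c # zs" by (cases xs) auto
    have "is_walk V E (rev (a#xs)) \<longleftrightarrow> is_walk V E (rev xs) \<and> is_walk V E [a] \<and> {last (rev xs), a} \<in> E"
      using walk_append[of "rev xs" "[a]"] False by simp
    then show ?thesis using Cons xs by (auto simp: insert_commute)
  qed
qed
lemma walk_mono: "is_walk V E xs \<Longrightarrow> V\<subseteq>V' \<Longrightarrow> E \<subseteq> E' \<Longrightarrow> is_walk V' E' xs"
  by (auto simp: is_walk_def)
definition nb :: "'a set set \<Rightarrow> 'a \<Rightarrow> 'a set" where "nb E x = {z. {x,z} \<in> E}"

lemma sg_finite_E: "simple_graph V E \<Longrightarrow> finite E"
  unfolding simple_graph_def by (meson Pow_iff finite_Pow_iff rev_finite_subset subsetI)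

lemma sg_edge: "simple_graph V E \<Longrightarrow> e\<in>E \<Longrightarrow> \<exists>a b. e={a,b} \<and> a\<noteq>b \<and> a\<in>V \<and> b\<in>V"
proof -
  assume a: "simple_graph V E" "e \<in> E"
  then have "e \<subseteq> V" "card e = 2" unfolding simple_graph_def by auto
  then obtain a b where "e = {a,b}" "a \<noteq> b" unfolding card_2_iff by blast
  then show ?thesis using \<open>e \<subseteq> V\<close> by blast
qed

lemma sg_edge2: "simple_graph V E \<Longrightarrow> {a,b}\<in>E \<Longrightarrow> a\<noteq>b \<and> a\<in>V \<and> b\<in>V"
  unfolding simple_graph_def by (cases "a = b") auto

lemma nb_sub: "simple_graph V E \<Longrightarrow> nb E x \<subseteq> V"
  unfolding nb_def using sg_edge2[of V E x] by auto

lemma nb_finite: "simple_graph V E \<Longrightarrow> finite (nb E x)"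
  using nb_sub[of V E x] unfolding simple_graph_def using finite_subset by blast

lemma degree_nb: assumes "simple_graph V E" shows "degree E x = card (nb E x)"
proof -
  have "(\<lambda>z. {x,z}) ` nb E x = {e\<in>E. x\<in>e}"
  proof
    show "(\<lambda>z. {x,z}) ` nb E x \<subseteq> {e\<in>E. x\<in>e}" unfolding nb_def by blast
    show "{e\<in>E. x\<in>e} \<subseteq> (\<lambda>z. {x,z}) ` nb E x"
    proof
      fix e assume e: "e \<in> {e\<in>E. x\<in>e}"
      then obtain a b where ab: "e = {a,b}" using sg_edge[OF assms] by blast
      show "e \<in> (\<lambda>z. {x,z}) ` nb E x"
      proof (cases "x = a")
        case True
        then have "b \<in> nb E x" using e ab by (simp add: nb_def)
        then show ?thesis using True ab by blast
      next
        case False then have xb: "x = b" using e ab by auto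
        then have "a \<in> nb E x" using e ab by (simp add: nb_def insert_commute)
        moreover have "e = {x,a}" using xb ab by (simp add: insert_commute)
        ultimately show ?thesis by blast
      qed
    qed
  qed
  moreover have "inj_on (\<lambda>z. {x,z}) (nb E x)" unfolding inj_on_def by (simp add: doubleton_eq_iff)
  then have "card ((\<lambda>z. {x,z}) ` nb E x) = card (nb E x)" by (rule card_image)
  ultimately show ?thesis unfolding degree_def by simp
qed

lemma handshake: assumes "simple_graph V E" shows "(\<Sum>v\<in>V. degree E v) = 2 * card E"
proof -
  have fV: "finite V" using assms by (simp add: simple_graph_def)
  have fE: "finite E" using sg_finite_E[OF assms] .
  have "(\<Sum>v\<in>V. degree E v) = (\<Sum>v\<in>V. \<Sum>e\<in>E. if v \<in> e then 1 else 0)"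
    unfolding degree_def using fE by (simp add: sum.inter_filter[symmetric])
  also have "\<dots> = (\<Sum>e\<in>E. \<Sum>v\<in>V. if v \<in> e then 1 else 0)" by (rule sum.swap)
  also have "\<dots> = (\<Sum>e\<in>E. card {v\<in>V. v\<in>e})" using fV by (simp add: sum.inter_filter[symmetric])
  also have "\<dots> = (\<Sum>e\<in>E. 2)"
  proof (rule sum.cong)
    fix e assume "e \<in> E"
    then have "{v\<in>V. v\<in>e} = e" "card e = 2" using assms by (auto simp: simple_graph_def)
    then show "card {v\<in>V. v\<in>e} = 2" by simp
  qed simp
  finally show ?thesis by simp
qed

lemma longest:
  assumes sg: "simple_graph V E" and c: "connected_graph V E" and n: "card V \<ge> 2"
  shows "\<exists>xs. distinct xs \<and> is_walk V E xs \<and> 2 \<le> length xs \<and>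
     (\<forall>ys. distinct ys \<and> is_walk V E ys \<longrightarrow> length ys \<le> length xs)"
proof -
  have fV: "finite V" using sg by (simp add: simple_graph_def)
  have "V \<noteq> {}" using n by auto
  then obtain a where a: "a \<in> V" by blast
  have "card (V - {a}) \<ge> 1" using n a fV by simp
  then have "V - {a} \<noteq> {}" by (metis card.empty not_one_le_zero)
  then obtain b where b: "b \<in> V - {a}" by blast
  have ab: "a \<in> V" "b \<in> V" "a \<noteq> b" using a b by auto
  then obtain ws where ws: "is_walk V E ws" "hd ws = a" "last ws = b" using c unfolding connected_graph_def by blast
  have "length ws \<noteq> 1"
  proof
    assume "length ws = 1"
    then obtain c where "ws = [c]" by (cases ws) auto
    then show False using ws ab by simp
  qed
  moreover have "ws \<noteq> []" using ws by (simp add: is_walk_def)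
  ultimately obtain c d rest where "ws = c # d # rest"
    by (metis One_nat_def length_Cons list.exhaust list.size(3))
  then have cd: "is_walk V E [c,d]" "c \<noteq> d" using ws sg_edge2[OF sg] by auto
  let ?P = "\<lambda>m. \<exists>xs. distinct xs \<and> is_walk V E xs \<and> length xs = m"
  have P2: "?P 2" using cd by (intro exI[of _ "[c,d]"]) auto
  have bnd: "\<forall>y. ?P y \<longrightarrow> y < card V + 1"
  proof (intro allI impI)
    fix y assume "?P y"
    then obtain xs where "distinct xs" "is_walk V E xs" "length xs = y" by blast
    then have "y = card (set xs)" "set xs \<subseteq> V" by (auto simp: distinct_card is_walk_def)
    then have "y \<le> card V" using card_mono[OF fV] by simp
    then show "y < card V + 1" by simp
  qed
  obtain m where m: "?P m" "\<forall>y. ?P y \<longrightarrow> y \<le> m"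
    using ex_has_greatest_nat[of ?P 2 "\<lambda>x. x" "card V + 1", OF P2 bnd] by auto
  then obtain xs where "distinct xs" "is_walk V E xs" "length xs = m" by blast
  moreover have "2 \<le> m" using m P2 by blast
  ultimately show ?thesis using m(2) by blast
qed

lemma endpoint:
  assumes sg: "simple_graph V E" and nc: "\<not> has_cycle V E" and d: "distinct xs" and w: "is_walk V E xs"
    and xs: "xs = x # b # rest"
    and mx: "\<forall>ys. distinct ys \<and> is_walk V E ys \<longrightarrow> length ys \<le> length xs"
  shows "nb E x = {b}"
proof
  show "{b} \<subseteq> nb E x" using w xs by (simp add: nb_def)
  show "nb E x \<subseteq> {b}"
  proof
    fix z assume z: "z \<in> nb E x"
    then have zE: "{x,z} \<in> E" by (simp add: nb_def)
    then have zx: "z \<noteq> x" "z \<in> V" using sg_edge2[OF sg] by auto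
    show "z \<in> {b}"
    proof (rule ccontr)
      assume zb: "z \<notin> {b}"
      show False
      proof (cases "z \<in> set rest")
        case False
        then have "z \<notin> set xs" using zx zb xs by auto
        then have "distinct (z # xs)" "is_walk V E (z # xs)" using d w xs zx zE
          by (auto simp: insert_commute)
        then show False using mx by fastforce
      next
        case True
        then obtain r1 r2 where r: "rest = r1 @ z # r2" by (meson split_list)
        define cs where "cs = x # b # r1 @ [z]"
        have xcs: "xs = cs @ r2" using xs r cs_def by simp
        have "is_walk V E cs"
        proof (cases "r2 = []")
          case True then show ?thesis using xcs w by simp
        next
          case False then show ?thesis using xcs w walk_append[of cs r2] cs_def by auto
        qed
        moreover have "distinct cs" using d xcs by simp
        moreover have "length cs \<ge> 3" by (simp add: cs_def)
        moreover have "{last cs, hd cs} \<in> E" using zE by (simp add: cs_def insert_commute)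
        ultimately show False using nc unfolding has_cycle_def by blast
      qed
    qed
  qed
qed

lemma conn_remove_leaf:
  assumes sg: "simple_graph V E" and c: "connected_graph V E" and x: "x \<in> V" and nx: "nb E x = {y}"
  shows "connected_graph (V - {x}) {e\<in>E. x \<notin> e}"
  unfolding connected_graph_def
proof (intro ballI)
  fix u v assume u: "u \<in> V - {x}" and v: "v \<in> V - {x}"
  let ?W = "\<lambda>ws. is_walk V E ws \<and> hd ws = u \<and> last ws = v"
  obtain ws0 where "?W ws0" using c u v unfolding connected_graph_def by blast
  then obtain ws where W: "?W ws" and mn: "\<forall>ys. ?W ys \<longrightarrow> length ws \<le> length ys"
    using ex_has_least_nat[of ?W ws0 length] by blast
  have xn: "x \<notin> set ws"
  proof
    assume "x \<in> set ws"
    then obtain as bs where wsd: "ws = as @ x # bs" by (meson split_list)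
    have asn: "as \<noteq> []" using wsd W u by auto
    have bsn: "bs \<noteq> []" using wsd W v by auto
    have wa: "is_walk V E as" and wx: "is_walk V E (x # bs)" and ex: "{last as, x} \<in> E"
      using walk_append[of as "x#bs"] asn W wsd by auto
    obtain b bs' where bsd: "bs = b # bs'" using bsn by (cases bs) auto
    have xb: "{x,b} \<in> E" and wb: "is_walk V E bs" using wx bsd by auto
    have "last as \<in> nb E x" using ex by (simp add: nb_def insert_commute)
    then have la: "last as = y" using nx by simp
    have "b \<in> nb E x" using xb by (simp add: nb_def)
    then have by': "b = y" using nx by simp
    show False
    proof (cases "bs' = []")
      case True
      have "?W as" using wa asn W wsd True la by' bsd by auto
      then show False using mn wsd by fastforce
    next
      case False
      obtain c cs where bs'd: "bs' = c # cs" using False by (cases bs') auto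
      have wb': "is_walk V E bs'" "{b, c} \<in> E" using wb bsd bs'd by auto
      have "is_walk V E (as @ bs')" using walk_append[of as bs'] asn False wa wb' la by' bs'd by simp
      moreover have "hd (as @ bs') = u" using asn W wsd by simp
      moreover have "last (as @ bs') = v" using False W wsd bsd by simp
      ultimately have "?W (as @ bs')" by blast
      then show False using mn wsd bsd by fastforce
    qed
  qed
  have "is_walk (V - {x}) {e\<in>E. x \<notin> e} ws"
    unfolding is_walk_def
  proof (intro conjI allI impI)
    show "ws \<noteq> []" using W by (simp add: is_walk_def)
    show "set ws \<subseteq> V - {x}" using W xn by (auto simp: is_walk_def)
    fix i assume i: "Suc i < length ws"
    then have "{ws ! i, ws ! Suc i} \<in> E" using W by (simp add: is_walk_def)
    moreover have "ws ! i \<noteq> x" "ws ! Suc i \<noteq> x" using xn i nth_mem[of i ws] nth_mem[of "Suc i" ws] by auto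
    ultimately show "{ws ! i, ws ! Suc i} \<in> {e\<in>E. x \<notin> e}" by simp
  qed
  then show "\<exists>xs. is_walk (V - {x}) {e\<in>E. x \<notin> e} xs \<and> hd xs = u \<and> last xs = v" using W by blast
qed

lemma tree_card_E: "is_tree V E \<Longrightarrow> card E + 1 = card V"
proof (induction "card V" arbitrary: V E rule: less_induct)
  case less
  have sg: "simple_graph V E" and c: "connected_graph V E" and nc: "\<not> has_cycle V E" and ne: "V \<noteq> {}"
    using less.prems by (auto simp: is_tree_def)
  have fV: "finite V" using sg by (simp add: simple_graph_def)
  show ?case
  proof (cases "card V \<ge> 2")
    case False
    moreover have "card V > 0" using ne fV by (simp add: card_gt_0_iff)
    ultimately have "card V = 1" by linarith
    then obtain a where Va: "V = {a}" using card_1_singleton_iff[of V] by auto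
    have "E = {}"
    proof (rule ccontr)
      assume "E \<noteq> {}"
      then obtain e where "e \<in> E" by blast
      then obtain p q where "e = {p,q}" "p \<noteq> q" "p \<in> V" "q \<in> V" using sg_edge[OF sg] by blast
      then show False using Va by auto
    qed
    then show ?thesis using \<open>card V = 1\<close> by simp
  next
    case True
    obtain xs where xs: "distinct xs" "is_walk V E xs" "2 \<le> length xs"
      "\<forall>ys. distinct ys \<and> is_walk V E ys \<longrightarrow> length ys \<le> length xs"
      using longest[OF sg c True] by blast
    then obtain x b rest where xsd: "xs = x # b # rest"
      by (cases xs; cases "tl xs") auto
    have nx: "nb E x = {b}" using endpoint[OF sg nc xs(1,2) xsd xs(4)] .
    have xV: "x \<in> V" using xs(2) xsd by simp
    define V' where "V' = V - {x}"
    define E' where "E' = {e\<in>E. x \<notin> e}"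
    have sg': "simple_graph V' E'" using sg unfolding simple_graph_def V'_def E'_def by auto
    have c': "connected_graph V' E'" using conn_remove_leaf[OF sg c xV nx] unfolding V'_def E'_def .
    have nc': "\<not> has_cycle V' E'"
    proof
      assume "has_cycle V' E'"
      then obtain cs where "length cs \<ge> 3" "distinct cs" "is_walk V' E' cs" "{last cs, hd cs} \<in> E'"
        unfolding has_cycle_def by blast
      moreover have "V' \<subseteq> V" "E' \<subseteq> E" unfolding V'_def E'_def by auto
      ultimately have "has_cycle V E" unfolding has_cycle_def using walk_mono by blast
      then show False using nc by simp
    qed
    have cV': "card V' = card V - 1" using xV fV by (simp add: V'_def)
    then have "card V' > 0" using True by linarith
    then have "V' \<noteq> {}" by auto
    then have tr: "is_tree V' E'" using sg' c' nc' by (simp add: is_tree_def)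
    have lt: "card V' < card V" using cV' True by linarith
    have IH: "card E' + 1 = card V'" using less.hyps[OF lt tr] .
    have fE: "finite E" using sg_finite_E[OF sg] .
    have "{e\<in>E. x\<in>e} = {{x,b}}"
    proof -
      have "card {e\<in>E. x\<in>e} = 1" using degree_nb[OF sg, of x] nx by (simp add: degree_def)
      then obtain a where "{e\<in>E. x\<in>e} = {a}" using card_1_singleton_iff[of "{e\<in>E. x\<in>e}"] by auto
      moreover have "{x,b} \<in> {e\<in>E. x\<in>e}" using xs(2) xsd by simp
      ultimately show ?thesis by auto
    qed
    have Eu: "E = E' \<union> {e\<in>E. x\<in>e}" and dj: "E' \<inter> {e\<in>E. x\<in>e} = {}" unfolding E'_def by auto
    have f1: "finite E'" and f2: "finite {e\<in>E. x\<in>e}" using fE unfolding E'_def by auto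
    have "card E = card E' + card {e\<in>E. x\<in>e}" using card_Un_disjoint[OF f1 f2 dj] Eu by simp
    then have "card E = card E' + 1" using \<open>{e\<in>E. x\<in>e} = {{x,b}}\<close> by simp
    then show ?thesis using IH cV' True by simp
  qed
qed



lemma walk_edge: "is_walk V E xs \<Longrightarrow> Suc i < length xs \<Longrightarrow> {xs!i, xs!Suc i} \<in> E"
  by (simp add: is_walk_def)

lemma deg_pos:
  assumes sg: "simple_graph V E" and c: "connected_graph V E" and n: "card V \<ge> 2" and v: "v \<in> V"
  shows "degree E v \<ge> 1"
proof -
  have fV: "finite V" using sg by (simp add: simple_graph_def)
  have "card (V - {v}) \<ge> 1" using n v fV by simp
  then have "V - {v} \<noteq> {}" by (metis card.empty not_one_le_zero)
  then obtain b where b: "b \<in> V - {v}" by blast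
  then obtain ws where ws: "is_walk V E ws" "hd ws = v" "last ws = b"
    using c v unfolding connected_graph_def by blast
  have "length ws \<noteq> 1"
  proof
    assume "length ws = 1"
    then obtain c where "ws = [c]" by (cases ws) auto
    then show False using ws b by simp
  qed
  moreover have "ws \<noteq> []" using ws by (simp add: is_walk_def)
  ultimately have "Suc 0 < length ws" by (cases ws) auto
  then have "{ws!0, ws!1} \<in> E" using walk_edge[OF ws(1), of 0] by simp
  moreover have "ws!0 = v" using ws \<open>ws \<noteq> []\<close> by (simp add: hd_conv_nth)
  ultimately have "ws!1 \<in> nb E v" by (simp add: nb_def)
  then have "nb E v \<noteq> {}" by blast
  then have "card (nb E v) \<noteq> 0" using nb_finite[OF sg] by simp
  then show ?thesis using degree_nb[OF sg] by simp
qed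

lemma sum_ge1_eq:
  fixes g :: "'b \<Rightarrow> real"
  assumes "finite B" "\<forall>y\<in>B. g y \<ge> 1" "sum g B = real (card B)"
  shows "\<forall>y\<in>B. g y = 1"
proof (rule ccontr)
  assume "\<not> (\<forall>y\<in>B. g y = 1)"
  then obtain y where y: "y \<in> B" "g y \<noteq> 1" by blast
  have "g y \<ge> 1" using assms(2) y(1) by blast
  then have "g y > 1" using y(2) by linarith
  then have ex: "\<exists>a\<in>B. (\<lambda>_. 1::real) a < g a" using y by blast
  have le: "\<forall>x\<in>B. (\<lambda>_. 1::real) x \<le> g x" using assms(2) by simp
  have "sum (\<lambda>_. 1::real) B < sum g B" using sum_strict_mono_ex1[OF assms(1) le ex] .
  then show False using assms(3) by simp
qed

lemma irr_split:
  fixes d :: "'a \<Rightarrow> real"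
  assumes fV: "finite V" and Sd: "(\<Sum>v\<in>V. d v - 1) = real (card V) - 2"
    and pos: "\<forall>v\<in>V. d v \<ge> 1"
    and A: "A = {v\<in>V. d v = 1}" and B: "B = {v\<in>V. d v \<noteq> 1}"
  shows "(\<Sum>x\<in>V. \<Sum>y\<in>V. \<bar>d x - d y\<bar>) = 2 * real (card A) * (real (card V) - 2) + (\<Sum>x\<in>B. \<Sum>y\<in>B. \<bar>d x - d y\<bar>)"
proof -
  have VAB: "V = A \<union> B" and dj: "A \<inter> B = {}" using A B by auto
  have fA: "finite A" and fB: "finite B" using fV A B by auto
  have dA: "\<And>x. x \<in> A \<Longrightarrow> d x = 1" using A by auto
  have dB: "\<And>x. x \<in> B \<Longrightarrow> d x \<ge> 1" using B pos by auto
  have split: "\<And>g::'a\<Rightarrow>real. sum g V = sum g A + sum g B"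
    using VAB dj fA fB sum.union_disjoint by metis
  have SB: "(\<Sum>y\<in>B. d y - 1) = real (card V) - 2"
  proof -
    have "(\<Sum>v\<in>V. d v - 1) = (\<Sum>y\<in>A. d y - 1) + (\<Sum>y\<in>B. d y - 1)" by (rule split)
    moreover have "(\<Sum>y\<in>A. d y - 1) = 0" using dA by simp
    ultimately show ?thesis using Sd by simp
  qed
  let ?F = "\<lambda>x y. \<bar>d x - d y\<bar>"
  have "(\<Sum>x\<in>V. \<Sum>y\<in>V. ?F x y) = (\<Sum>x\<in>A. \<Sum>y\<in>V. ?F x y) + (\<Sum>x\<in>B. \<Sum>y\<in>V. ?F x y)"
    by (rule split)
  also have "(\<Sum>x\<in>A. \<Sum>y\<in>V. ?F x y) = (\<Sum>x\<in>A. (\<Sum>y\<in>A. ?F x y) + (\<Sum>y\<in>B. ?F x y))"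
    using split by simp
  also have "\<dots> = (\<Sum>x\<in>A. (\<Sum>y\<in>B. d y - 1))"
  proof (rule sum.cong)
    fix x assume x: "x \<in> A"
    have "(\<Sum>y\<in>A. ?F x y) = 0" using dA x by simp
    moreover have "(\<Sum>y\<in>B. ?F x y) = (\<Sum>y\<in>B. d y - 1)"
    proof (rule sum.cong)
      fix y assume "y \<in> B"
      then have "d y \<ge> 1" by (rule dB)
      then show "?F x y = d y - 1" using dA x by simp
    qed simp
    ultimately show "(\<Sum>y\<in>A. ?F x y) + (\<Sum>y\<in>B. ?F x y) = (\<Sum>y\<in>B. d y - 1)" by simp
  qed simp
  also have "\<dots> = real (card A) * (real (card V) - 2)" using SB by simp
  also have "(\<Sum>x\<in>B. \<Sum>y\<in>V. ?F x y) = (\<Sum>x\<in>B. (\<Sum>y\<in>A. ?F x y) + (\<Sum>y\<in>B. ?F x y))"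
    using split by simp
  also have "\<dots> = (\<Sum>x\<in>B. real (card A) * (d x - 1) + (\<Sum>y\<in>B. ?F x y))"
  proof (rule sum.cong)
    fix x assume x: "x \<in> B"
    have "(\<Sum>y\<in>A. ?F x y) = (\<Sum>y\<in>A. d x - 1)"
    proof (rule sum.cong)
      fix y assume "y \<in> A"
      then show "?F x y = d x - 1" using dA dB[OF x] by simp
    qed simp
    then show "(\<Sum>y\<in>A. ?F x y) + (\<Sum>y\<in>B. ?F x y) = real (card A) * (d x - 1) + (\<Sum>y\<in>B. ?F x y)"
      by simp
  qed simp
  also have "\<dots> = real (card A) * (\<Sum>x\<in>B. d x - 1) + (\<Sum>x\<in>B. \<Sum>y\<in>B. ?F x y)"
    by (simp add: sum.distrib sum_distrib_left)
  finally show ?thesis using SB by simp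
qed



lemma nbr:
  assumes sg: "simple_graph V E" and d: "distinct xs" and w: "is_walk V E xs" and l: "2 \<le> length xs"
    and h: "card (nb E (hd xs)) = 1" and t: "card (nb E (last xs)) = 1"
    and deg: "\<forall>v\<in>V. card (nb E v) \<le> 2" and i: "i < length xs" and e: "{xs!i, z} \<in> E"
  shows "(0 < i \<and> z = xs!(i-1)) \<or> (Suc i < length xs \<and> z = xs!Suc i)"
proof (rule ccontr)
  assume nz: "\<not> ?thesis"
  define p where "p = xs!i"
  define N where "N = nb E p"
  have fN: "finite N" unfolding N_def using nb_finite[OF sg] .
  have zN: "z \<in> N" using e by (simp add: N_def nb_def p_def)
  have pV: "p \<in> V" using w i unfolding p_def is_walk_def by (meson nth_mem subsetD)
  have two: "\<And>a b. a \<in> N \<Longrightarrow> b \<in> N \<Longrightarrow> a \<noteq> b \<Longrightarrow> card N \<ge> 2"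
  proof -
    fix a b assume "a \<in> N" "b \<in> N" "a \<noteq> b"
    then have "{a,b} \<subseteq> N" "card {a,b} = 2" by auto
    then show "card N \<ge> 2" using card_mono[OF fN] by metis
  qed
  show False
  proof (cases "i = 0")
    case True
    have "{xs!0, xs!Suc 0} \<in> E" using walk_edge[OF w, of 0] l by simp
    then have a: "xs!Suc 0 \<in> N" using True by (simp add: N_def nb_def p_def)
    have "z \<noteq> xs!Suc 0" using nz True l by auto
    then have "card N \<ge> 2" using two[OF zN a] by blast
    moreover have "hd xs = p" using True l by (cases xs) (auto simp: p_def)
    ultimately show False using h by (simp add: N_def)
  next
    case False
    have ei: "{xs!(i-1), xs!Suc (i-1)} \<in> E" using walk_edge[OF w, of "i-1"] False i by simp
    then have a: "xs!(i-1) \<in> N" using False by (simp add: N_def nb_def p_def insert_commute)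
    have za: "z \<noteq> xs!(i-1)" using nz False by auto
    show False
    proof (cases "Suc i < length xs")
      case False
      then have "i = length xs - 1" using i by simp
      moreover have "xs \<noteq> []" using i by auto
      ultimately have "last xs = p" by (simp add: p_def last_conv_nth)
      moreover have "card N \<ge> 2" using two[OF zN a za] .
      ultimately show False using t by (simp add: N_def)
    next
      case True
      have "{xs!i, xs!Suc i} \<in> E" using walk_edge[OF w True] .
      then have b: "xs!Suc i \<in> N" by (simp add: N_def nb_def p_def)
      have zb: "z \<noteq> xs!Suc i" using nz True by auto
      have ab: "xs!(i-1) \<noteq> xs!Suc i" using d True nth_eq_iff_index_eq[OF d, of "i-1" "Suc i"] i by auto
      have "{xs!(i-1), xs!Suc i, z} \<subseteq> N" using a b zN by auto
      moreover have "card {xs!(i-1), xs!Suc i, z} = 3" using ab za zb by auto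
      ultimately have "card N \<ge> 3" using card_mono[OF fN] by metis
      moreover have "card N \<le> 2" using deg pV by (simp add: N_def)
      ultimately show False by simp
    qed
  qed
qed

lemma pathE_iff: "{i,j} \<in> path_E n \<longleftrightarrow> (j = Suc i \<and> Suc i < n) \<or> (i = Suc j \<and> Suc j < n)"
  unfolding path_E_def by (auto simp: doubleton_eq_iff)

lemma path_iso:
  assumes sg: "simple_graph V E" and c: "connected_graph V E" and d: "distinct xs" and w: "is_walk V E xs" and l: "2 \<le> length xs"
    and h: "card (nb E (hd xs)) = 1" and t: "card (nb E (last xs)) = 1"
    and deg: "\<forall>v\<in>V. card (nb E v) \<le> 2"
  shows "graph_iso V E (path_V (card V)) (path_E (card V))"
proof -
  note nb1 = nbr[OF sg d w l h t deg]
  have clo: "\<And>i z. i < length xs \<Longrightarrow> {xs!i, z} \<in> E \<Longrightarrow> z \<in> set xs"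
  proof -
    fix i z assume i: "i < length xs" and e: "{xs!i, z} \<in> E"
    show "z \<in> set xs" using nb1[OF i e] i by auto
  qed
  have VS: "V \<subseteq> set xs"
  proof
    fix v assume v: "v \<in> V"
    have hx: "hd xs \<in> V" using w l by (cases xs) (auto simp: is_walk_def)
    obtain ws where ws: "is_walk V E ws" "hd ws = hd xs" "last ws = v" using c v hx unfolding connected_graph_def by blast
    have wsn: "ws \<noteq> []" using ws by (simp add: is_walk_def)
    have "\<forall>k. k < length ws \<longrightarrow> ws!k \<in> set xs"
    proof (intro allI)
      fix k show "k < length ws \<longrightarrow> ws!k \<in> set xs"
      proof (induction k)
        case 0
        show ?case using ws wsn l by (cases xs) (auto simp: hd_conv_nth)
      next
        case (Suc k)
        show ?case
        proof
          assume sk: "Suc k < length ws"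
          then have "ws!k \<in> set xs" using Suc by simp
          then obtain i where i: "i < length xs" "xs!i = ws!k" using in_set_conv_nth[of "ws!k" xs] by blast
          have "{ws!k, ws!Suc k} \<in> E" using walk_edge[OF ws(1) sk] .
          then show "ws!Suc k \<in> set xs" using clo[OF i(1)] i(2) by simp
        qed
      qed
    qed
    moreover have "length ws - 1 < length ws" using wsn by simp
    ultimately have "ws!(length ws - 1) \<in> set xs" by blast
    then show "v \<in> set xs" using ws(3) wsn by (simp add: last_conv_nth)
  qed
  have SV: "set xs = V" using VS w by (auto simp: is_walk_def)
  define n where "n = card V"
  have nl: "n = length xs" using distinct_card[OF d] SV n_def by simp
  define g where "g = (\<lambda>i. xs!i)"
  have bg: "bij_betw g {..<n} V" using bij_betw_nth[OF d] nl SV unfolding g_def by auto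
  define f where "f = the_inv_into {..<n} g"
  have bf: "bij_betw f V {..<n}" unfolding f_def using bij_betw_the_inv_into[OF bg] .
  have gf: "\<And>x. x \<in> V \<Longrightarrow> g (f x) = x" unfolding f_def using f_the_inv_into_f_bij_betw[OF bg] by blast
  have fl: "\<And>x. x \<in> V \<Longrightarrow> f x < n" using bf by (auto simp: bij_betw_def)
  have key: "\<And>i j. i < n \<Longrightarrow> j < n \<Longrightarrow> {xs!i, xs!j} \<in> E \<longleftrightarrow> {i,j} \<in> path_E n"
  proof -
    fix i j assume i: "i < n" and j: "j < n"
    show "{xs!i, xs!j} \<in> E \<longleftrightarrow> {i,j} \<in> path_E n"
    proof
      assume e: "{xs!i, xs!j} \<in> E"
      have "(0 < i \<and> xs!j = xs!(i-1)) \<or> (Suc i < length xs \<and> xs!j = xs!Suc i)"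
        using nb1[OF _ e] i nl by simp
      then have "(0 < i \<and> j = i - 1) \<or> (Suc i < n \<and> j = Suc i)"
      proof
        assume a: "0 < i \<and> xs!j = xs!(i-1)"
        then have "j = i - 1" using nth_eq_iff_index_eq[OF d, of j "i-1"] i j nl by simp
        then show ?thesis using a by simp
      next
        assume a: "Suc i < length xs \<and> xs!j = xs!Suc i"
        then have "j = Suc i" using nth_eq_iff_index_eq[OF d, of j "Suc i"] j nl by simp
        then show ?thesis using a nl by simp
      qed
      then show "{i,j} \<in> path_E n" unfolding pathE_iff using i by auto
    next
      assume "{i,j} \<in> path_E n"
      then have "(j = Suc i \<and> Suc i < n) \<or> (i = Suc j \<and> Suc j < n)" unfolding pathE_iff .
      then show "{xs!i, xs!j} \<in> E"
      proof
        assume "j = Suc i \<and> Suc i < n"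
        then show ?thesis using walk_edge[OF w, of i] nl by simp
      next
        assume "i = Suc j \<and> Suc j < n"
        then show ?thesis using walk_edge[OF w, of j] nl by (simp add: insert_commute)
      qed
    qed
  qed
  have "\<forall>x\<in>V. \<forall>y\<in>V. {x, y} \<in> E \<longleftrightarrow> {f x, f y} \<in> path_E n"
  proof (intro ballI)
    fix x y assume x: "x \<in> V" and y: "y \<in> V"
    have "{x,y} = {xs!(f x), xs!(f y)}" using gf[OF x] gf[OF y] unfolding g_def by simp
    then show "{x, y} \<in> E \<longleftrightarrow> {f x, f y} \<in> path_E n" using key[OF fl[OF x] fl[OF y]] by simp
  qed
  moreover have "path_V n = {..<n}" by (auto simp: path_V_def)
  ultimately show ?thesis unfolding graph_iso_def n_def using bf n_def by auto
qed

lemma iso_deg_le2: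
  assumes sg: "simple_graph V E" and iso: "graph_iso V E (path_V n) (path_E n)" and v: "v \<in> V"
  shows "card (nb E v) \<le> 2"
proof -
  obtain f where bf: "bij_betw f V (path_V n)" and fe: "\<forall>x\<in>V. \<forall>y\<in>V. {x, y} \<in> E \<longleftrightarrow> {f x, f y} \<in> path_E n"
    using iso unfolding graph_iso_def by blast
  have nbP: "nb (path_E n) (f v) \<subseteq> {f v - 1, Suc (f v)}"
  proof
    fix w assume "w \<in> nb (path_E n) (f v)"
    then have "{f v, w} \<in> path_E n" by (simp add: nb_def)
    then show "w \<in> {f v - 1, Suc (f v)}" unfolding pathE_iff by auto
  qed
  have sub: "f ` nb E v \<subseteq> nb (path_E n) (f v)"
  proof
    fix w assume "w \<in> f ` nb E v"
    then obtain z where z: "z \<in> nb E v" "w = f z" by blast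
    then have "z \<in> V" using nb_sub[OF sg] by blast
    then show "w \<in> nb (path_E n) (f v)" using fe v z by (simp add: nb_def)
  qed
  have "inj_on f V" using bf by (simp add: bij_betw_def)
  then have inj: "inj_on f (nb E v)" using nb_sub[OF sg, of v] inj_on_subset by blast
  have "card (nb E v) = card (f ` nb E v)" using card_image[OF inj] by simp
  also have "\<dots> \<le> card {f v - 1, Suc (f v)}"
  proof (rule card_mono)
    show "finite {f v - 1, Suc (f v)}" by simp
    show "f ` nb E v \<subseteq> {f v - 1, Suc (f v)}" using sub nbP by (rule order_trans)
  qed
  also have "\<dots> \<le> 2" by (simp add: card_insert_le_m1)
  finally show ?thesis .
qed



theorem theorem5:
  fixes V :: "'a set" and E :: "'a set set" and n :: nat
  assumes "n \<ge> 2" and "is_tree V E" and "card V = n"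
  shows "irr_t V E \<ge> 2 * real n - 4
         \<and> (irr_t V E = 2 * real n - 4 \<longleftrightarrow> graph_iso V E (path_V n) (path_E n))"
proof -
  have sg: "simple_graph V E" and c: "connected_graph V E" and nc: "\<not> has_cycle V E"
    using assms(2) by (auto simp: is_tree_def)
  have fV: "finite V" using sg by (simp add: simple_graph_def)
  have n2: "card V \<ge> 2" using assms by simp
  have cardE: "card E + 1 = n" using tree_card_E[OF assms(2)] assms(3) by simp
  define d where "d = (\<lambda>v. real (degree E v))"
  have hs: "(\<Sum>v\<in>V. degree E v) = 2 * card E" using handshake[OF sg] .
  have Sd: "(\<Sum>v\<in>V. d v - 1) = real (card V) - 2"
  proof -
    have "(\<Sum>v\<in>V. d v - 1) = (\<Sum>v\<in>V. d v) - (\<Sum>v\<in>V. 1)" by (rule sum_subtractf)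
    also have "(\<Sum>v\<in>V. d v) = real (2 * card E)" unfolding d_def using hs of_nat_sum by metis
    finally show ?thesis using cardE assms(3) by simp
  qed
  have degpos: "\<And>v. v \<in> V \<Longrightarrow> degree E v \<ge> 1" using deg_pos[OF sg c n2] by blast
  have pos: "\<forall>v\<in>V. d v \<ge> 1" using degpos unfolding d_def by simp
  define A where "A = {v\<in>V. d v = 1}"
  define B where "B = {v\<in>V. d v \<noteq> 1}"
  define SBB where "SBB = (\<Sum>x\<in>B. \<Sum>y\<in>B. \<bar>d x - d y\<bar>)"
  have spl: "(\<Sum>x\<in>V. \<Sum>y\<in>V. \<bar>d x - d y\<bar>) = 2 * real (card A) * (real (card V) - 2) + SBB"
    using irr_split[OF fV Sd pos A_def B_def] unfolding SBB_def .
  have irr: "irr_t V E = real (card A) * (real n - 2) + SBB / 2"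
    unfolding irr_t_def using spl assms(3) unfolding d_def by simp
  have SBB0: "SBB \<ge> 0" unfolding SBB_def by (simp add: sum_nonneg)
  have fA: "finite A" and fB: "finite B" using fV unfolding A_def B_def by auto
  have AB: "card A + card B = n"
  proof -
    have "V = A \<union> B" "A \<inter> B = {}" unfolding A_def B_def by auto
    then show ?thesis using card_Un_disjoint[OF fA fB] assms(3) by simp
  qed
  have dB: "\<And>v. v \<in> B \<Longrightarrow> d v \<ge> 2"
  proof -
    fix v assume "v \<in> B"
    then have "v \<in> V" "degree E v \<noteq> 1" unfolding B_def d_def by auto
    then have "degree E v \<ge> 2" using degpos by fastforce
    then show "d v \<ge> 2" unfolding d_def by simp
  qed
  have SB: "(\<Sum>y\<in>B. d y - 1) = real n - 2"
  proof -
    have "V = A \<union> B" "A \<inter> B = {}" unfolding A_def B_def by auto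
    then have "(\<Sum>v\<in>V. d v - 1) = (\<Sum>y\<in>A. d y - 1) + (\<Sum>y\<in>B. d y - 1)"
      using sum.union_disjoint[OF fA fB] by simp
    moreover have "(\<Sum>y\<in>A. d y - 1) = 0" unfolding A_def by simp
    ultimately show ?thesis using Sd assms(3) by simp
  qed
  obtain xs where xs: "distinct xs" "is_walk V E xs" "2 \<le> length xs"
      "\<forall>ys. distinct ys \<and> is_walk V E ys \<longrightarrow> length ys \<le> length xs"
    using longest[OF sg c n2] by blast
  obtain x b rest where xsd: "xs = x # b # rest" using xs(3) by (cases xs; cases "tl xs") auto
  have h1: "nb E (hd xs) = {b}" using endpoint[OF sg nc xs(1,2) xsd xs(4)] xsd by simp
  obtain y b' rest' where rxsd: "rev xs = y # b' # rest'" using xs(3)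
    by (cases "rev xs"; cases "tl (rev xs)") auto
  have t1: "nb E (last xs) = {b'}"
  proof -
    have d': "distinct (rev xs)" using xs(1) by simp
    have w': "is_walk V E (rev xs)" using xs(2) by simp
    have m': "\<forall>ys. distinct ys \<and> is_walk V E ys \<longrightarrow> length ys \<le> length (rev xs)" using xs(4) by simp
    have "nb E y = {b'}" using endpoint[OF sg nc d' w' rxsd m'] .
    moreover have "hd (rev xs) = last xs" by (simp add: hd_rev)
    then have "y = last xs" using rxsd by simp
    ultimately show ?thesis by simp
  qed
  have hc: "card (nb E (hd xs)) = 1" and tc: "card (nb E (last xs)) = 1" using h1 t1 by auto
  have hl: "hd xs \<noteq> last xs"
  proof -
    have ne: "xs \<noteq> []" using xs(3) by auto
    have "hd xs = xs!0" "last xs = xs!(length xs - 1)" using hd_conv_nth[OF ne] last_conv_nth[OF ne] by auto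
    then show ?thesis using nth_eq_iff_index_eq[OF xs(1), of 0 "length xs - 1"] xs(3) ne by simp
  qed
  have hV: "hd xs \<in> V" and lV: "last xs \<in> V" using xs(2,3) unfolding is_walk_def by auto
  have "hd xs \<in> A" "last xs \<in> A" using hc tc hV lV degree_nb[OF sg] unfolding A_def d_def by auto
  then have "{hd xs, last xs} \<subseteq> A" by simp
  then have "card {hd xs, last xs} \<le> card A" using card_mono[OF fA] by blast
  then have A2: "card A \<ge> 2" using hl by simp
  have part1: "irr_t V E \<ge> 2 * real n - 4"
  proof -
    have "real (card A) * (real n - 2) \<ge> 2 * (real n - 2)"
      using A2 assms(1) by (intro mult_right_mono) auto
    then show ?thesis using irr SBB0 by simp
  qed
  define D2 where "D2 = (\<forall>v\<in>V. degree E v \<le> 2)"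
  have e1: "irr_t V E = 2 * real n - 4 \<Longrightarrow> D2"
  proof -
    assume eq: "irr_t V E = 2 * real n - 4"
    have "(real (card A) - 2) * (real n - 2) + SBB / 2 = 0" using eq irr by (simp add: algebra_simps)
    moreover have "(real (card A) - 2) * (real n - 2) \<ge> 0" using A2 assms(1) by simp
    ultimately have z: "(real (card A) - 2) * (real n - 2) = 0" using SBB0 by linarith
    have cA: "card A = 2"
    proof (cases "n = 2")
      case True then show ?thesis using AB A2 by simp
    next
      case False then show ?thesis using z assms(1) by simp
    qed
    then have cB: "real (card B) = real n - 2" using AB by auto
    have "\<forall>y\<in>B. d y - 1 = 1" using sum_ge1_eq[OF fB, of "\<lambda>y. d y - 1"] dB SB cB by fastforce
    then have "\<forall>y\<in>B. d y = 2" by simp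
    then show D2 unfolding D2_def A_def B_def d_def by fastforce
  qed
  have e2: "D2 \<Longrightarrow> irr_t V E = 2 * real n - 4"
  proof -
    assume D: D2
    have d2: "\<forall>y\<in>B. d y = 2"
    proof
      fix y assume y: "y \<in> B"
      then have "d y \<le> 2" using D unfolding D2_def B_def d_def by auto
      then show "d y = 2" using dB[OF y] by simp
    qed
    have "(\<Sum>y\<in>B. d y - 1) = (\<Sum>y\<in>B. 1)" using d2 by simp
    then have "real (card B) = real n - 2" using SB by simp
    then have cA: "card A = 2" using AB by linarith
    have "SBB = 0" unfolding SBB_def using d2 by simp
    then show ?thesis using irr cA by simp
  qed
  have e3: "D2 \<Longrightarrow> graph_iso V E (path_V n) (path_E n)"
  proof -
    assume D: D2
    have "\<forall>v\<in>V. card (nb E v) \<le> 2" using D degree_nb[OF sg] unfolding D2_def by simp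
    then show ?thesis using path_iso[OF sg c xs(1,2,3) hc tc] assms(3) by simp
  qed
  have e4: "graph_iso V E (path_V n) (path_E n) \<Longrightarrow> D2"
    unfolding D2_def using iso_deg_le2[OF sg] degree_nb[OF sg] by simp
  show ?thesis using part1 e1 e2 e3 e4 by blast
qed

end
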